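(* Let $\mathcal N_1,\mathcal N_2,\mathcal N_3$ be nested graphs. If $\mu_1:\mathcal N_1\to\mathcal N_2$ and $\mu_2:\mathcal N_2\to\mathcal N_3$ are mergers, then $\mu_2\circ\mu_1$ is a merger. If $\kappa_1:\mathcal N_1\to\mathcal N_2$ and $\kappa_2:\mathcal N_2\to\mathcal N_3$ are contractions, then $\kappa_2\circ\kappa_1$ is a contraction.
   Context: A nested graph is a small category $\mathcal N$ for which there exists at least one functor $G:\mathcal N\to\underline n$ to a finite ordinal $\underline n$ (viewed as the category with a unique morphism $i\to j$ when $i\le j$ and none otherwise) sending every non-identity morphism to a non-identity morphism. Objects are called nodes. A flag is a non-identity morphism, said to be decorated by its domain. A flag is irreducible if it is not a composite of two flags. A vertex of a nested graph is a node that is not the domain of any flag; a corolla is a nested graph with exactly one vertex. A functor $\phi$ contracts a flag $f$ if $\phi(f)$ is an identity. A functor $\phi:\mathcal N_1\to\mathcal N_2$ between nested graphs is admissible if (1) for every irreducible flag $f$ of $\mathcal N_1$, $\phi(f)$ is an identity or an irreducible flag, and (2) for every irreducible flag $f:A\to B$ of $\mathcal N_1$ contracted by $\phi$, $\phi$ contracts every irreducible flag with domain $A$. An epi-functor $\phi:\mathcal N_1\to\mathcal N_2$ is a functor whose image generates all of $\mathcal N_2$ (every morphism of $\mathcal N_2$ is a composite of images of morphisms of $\mathcal N_1$). A merger is an admissible epi-functor $\mu:\mathcal N_1\to\mathcal N_2$ such that $\mathcal N_2$ is a quotient of $\mathcal N_1$ by an equivalence relation on the objects of $\mathcal N_1$.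 A contraction is an admissible epi-functor $\kappa:\mathcal N_1\to\mathcal N_2$ such that for every node $A_2$ of $\mathcal N_2$ the fiber $\kappa^{-1}(A_2)$ (the subcategory of $\mathcal N_1$ of objects mapped to $A_2$ and morphisms mapped to the identity of $A_2$) is a corolla. *)

theory Defs
  imports Main
begin

text \<open>A small category: a set of objects, a set of morphisms, domain, codomain,
  identities and composition; Cmp g f is g after f (defined when Cod f = Dom g).\<close>

record ('o,'m) cat =
  Obj :: "'o set"
  Mor :: "'m set"
  Dom :: "'m \<Rightarrow> 'o"
  Cod :: "'m \<Rightarrow> 'o"
  Idm :: "'o \<Rightarrow> 'm"
  Cmp :: "'m \<Rightarrow> 'm \<Rightarrow> 'm"

definition category :: "('o,'m) cat \<Rightarrow> bool" where
  "category C \<longleftrightarrow>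
     (\<forall>f\<in>Mor C. Dom C f \<in> Obj C \<and> Cod C f \<in> Obj C) \<and>
     (\<forall>A\<in>Obj C. Idm C A \<in> Mor C \<and> Dom C (Idm C A) = A \<and> Cod C (Idm C A) = A) \<and>
     (\<forall>f\<in>Mor C. \<forall>g\<in>Mor C. Cod C f = Dom C g \<longrightarrow>
        Cmp C g f \<in> Mor C \<and> Dom C (Cmp C g f) = Dom C f \<and> Cod C (Cmp C g f) = Cod C g) \<and>
     (\<forall>f\<in>Mor C. Cmp C (Idm C (Cod C f)) f = f \<and> Cmp C f (Idm C (Dom C f)) = f) \<and>
     (\<forall>f\<in>Mor C. \<forall>g\<in>Mor C. \<forall>h\<in>Mor C. Cod C f = Dom C g \<longrightarrow> Cod C g = Dom C h \<longrightarrow>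
        Cmp C h (Cmp C g f) = Cmp C (Cmp C h g) f)"

definition "functor" :: "('o1,'m1) cat \<Rightarrow> ('o2,'m2) cat \<Rightarrow> ('o1 \<Rightarrow> 'o2) \<Rightarrow> ('m1 \<Rightarrow> 'm2) \<Rightarrow> bool" where
  "functor C D Fo Fm \<longleftrightarrow> category C \<and> category D \<and>
     (\<forall>A\<in>Obj C. Fo A \<in> Obj D) \<and>
     (\<forall>f\<in>Mor C. Fm f \<in> Mor D \<and> Dom D (Fm f) = Fo (Dom C f) \<and> Cod D (Fm f) = Fo (Cod C f)) \<and>
     (\<forall>A\<in>Obj C. Fm (Idm C A) = Idm D (Fo A)) \<and>
     (\<forall>f\<in>Mor C. \<forall>g\<in>Mor C. Cod C f = Dom C g \<longrightarrow> Fm (Cmp C g f) = Cmp D (Fm g) (Fm f))"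

definition is_identity :: "('o,'m) cat \<Rightarrow> 'm \<Rightarrow> bool" where
  "is_identity C f \<longleftrightarrow> f = Idm C (Dom C f)"

text \<open>The finite ordinal n = {0 < 1 < ... < n-1}, a unique morphism (i,j) for i \<le> j.\<close>

definition ord_cat :: "nat \<Rightarrow> (nat, nat \<times> nat) cat" where
  "ord_cat n = \<lparr> Obj = {..<n}, Mor = {(i,j). i \<le> j \<and> j < n}, Dom = fst, Cod = snd,
                 Idm = (\<lambda>i. (i,i)), Cmp = (\<lambda>g f. (fst f, snd g)) \<rparr>"

definition nested_graph :: "('o,'m) cat \<Rightarrow> bool" where
  "nested_graph N \<longleftrightarrow> category N \<and>
     (\<exists>n Go Gm. functor N (ord_cat n) Go Gm \<and>
        (\<forall>f\<in>Mor N. \<not> is_identity N f \<longrightarrow> \<not> is_identity (ord_cat n) (Gm f)))"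

definition flag :: "('o,'m) cat \<Rightarrow> 'm \<Rightarrow> bool" where
  "flag N f \<longleftrightarrow> f \<in> Mor N \<and> \<not> is_identity N f"

definition irreducible_flag :: "('o,'m) cat \<Rightarrow> 'm \<Rightarrow> bool" where
  "irreducible_flag N f \<longleftrightarrow> flag N f \<and>
     \<not> (\<exists>g h. flag N g \<and> flag N h \<and> Cod N g = Dom N h \<and> f = Cmp N h g)"

definition vertex :: "('o,'m) cat \<Rightarrow> 'o \<Rightarrow> bool" where
  "vertex N A \<longleftrightarrow> A \<in> Obj N \<and> \<not> (\<exists>f. flag N f \<and> Dom N f = A)"

definition corolla :: "('o,'m) cat \<Rightarrow> bool" where
  "corolla N \<longleftrightarrow> nested_graph N \<and> (\<exists>!v. vertex N v)"

definition admissible :: "('o1,'m1) cat \<Rightarrow> ('o2,'m2) cat \<Rightarrow> ('o1 \<Rightarrow> 'o2) \<Rightarrow> ('m1 \<Rightarrow> 'm2) \<Rightarrow> bool" where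
  "admissible N1 N2 Fo Fm \<longleftrightarrow> functor N1 N2 Fo Fm \<and>
     (\<forall>f. irreducible_flag N1 f \<longrightarrow> is_identity N2 (Fm f) \<or> irreducible_flag N2 (Fm f)) \<and>
     (\<forall>f. irreducible_flag N1 f \<longrightarrow> is_identity N2 (Fm f) \<longrightarrow>
        (\<forall>g. irreducible_flag N1 g \<longrightarrow> Dom N1 g = Dom N1 f \<longrightarrow> is_identity N2 (Fm g)))"

inductive_set generated_by_image :: "('o1,'m1) cat \<Rightarrow> ('o2,'m2) cat \<Rightarrow> ('m1 \<Rightarrow> 'm2) \<Rightarrow> 'm2 set"
  for C D Fm where
  img: "f \<in> Mor C \<Longrightarrow> Fm f \<in> generated_by_image C D Fm"
| comp: "g \<in> generated_by_image C D Fm \<Longrightarrow> h \<in> generated_by_image C D Fm \<Longrightarrow>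
         Cod D g = Dom D h \<Longrightarrow> Cmp D h g \<in> generated_by_image C D Fm"

definition epi_functor :: "('o1,'m1) cat \<Rightarrow> ('o2,'m2) cat \<Rightarrow> ('o1 \<Rightarrow> 'o2) \<Rightarrow> ('m1 \<Rightarrow> 'm2) \<Rightarrow> bool" where
  "epi_functor C D Fo Fm \<longleftrightarrow> functor C D Fo Fm \<and> Mor D \<subseteq> generated_by_image C D Fm"

text \<open>F : C \<rightarrow> D exhibits D as the quotient of C by the equivalence relation
  "F A = F B" on objects: universal property in the category of small categories,
  tested against all small categories whose objects/morphisms live in the types
  given by the itself-argument.\<close>

definition quotient_functor ::
  "('o3 \<times> 'm3) itself \<Rightarrow> ('o1,'m1) cat \<Rightarrow> ('o2,'m2) cat \<Rightarrow> ('o1 \<Rightarrow> 'o2) \<Rightarrow> ('m1 \<Rightarrow> 'm2) \<Rightarrow> bool" where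
  "quotient_functor T C D Fo Fm \<longleftrightarrow> functor C D Fo Fm \<and>
     (\<forall>(E :: ('o3,'m3) cat) Go Gm. functor C E Go Gm \<and>
        (\<forall>A\<in>Obj C. \<forall>B\<in>Obj C. Fo A = Fo B \<longrightarrow> Go A = Go B) \<longrightarrow>
        (\<exists>Ho Hm. functor D E Ho Hm \<and> (\<forall>A\<in>Obj C. Ho (Fo A) = Go A) \<and> (\<forall>f\<in>Mor C. Hm (Fm f) = Gm f)) \<and>
        (\<forall>Ho Hm Ho' Hm'.
           functor D E Ho Hm \<and> (\<forall>A\<in>Obj C. Ho (Fo A) = Go A) \<and> (\<forall>f\<in>Mor C. Hm (Fm f) = Gm f) \<longrightarrow>
           functor D E Ho' Hm' \<and> (\<forall>A\<in>Obj C. Ho' (Fo A) = Go A) \<and> (\<forall>f\<in>Mor C. Hm' (Fm f) = Gm f) \<longrightarrow>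
           (\<forall>A\<in>Obj D. Ho A = Ho' A) \<and> (\<forall>f\<in>Mor D. Hm f = Hm' f)))"

definition merger ::
  "('o3 \<times> 'm3) itself \<Rightarrow> ('o1,'m1) cat \<Rightarrow> ('o2,'m2) cat \<Rightarrow> ('o1 \<Rightarrow> 'o2) \<Rightarrow> ('m1 \<Rightarrow> 'm2) \<Rightarrow> bool" where
  "merger T N1 N2 Fo Fm \<longleftrightarrow> admissible N1 N2 Fo Fm \<and> epi_functor N1 N2 Fo Fm \<and>
     quotient_functor T N1 N2 Fo Fm"

definition fiber :: "('o1,'m1) cat \<Rightarrow> ('o2,'m2) cat \<Rightarrow> ('o1 \<Rightarrow> 'o2) \<Rightarrow> ('m1 \<Rightarrow> 'm2) \<Rightarrow> 'o2 \<Rightarrow> ('o1,'m1) cat" where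
  "fiber N1 N2 Fo Fm A2 = N1 \<lparr> Obj := {A\<in>Obj N1. Fo A = A2},
                               Mor := {f\<in>Mor N1. Fm f = Idm N2 A2} \<rparr>"

definition contraction :: "('o1,'m1) cat \<Rightarrow> ('o2,'m2) cat \<Rightarrow> ('o1 \<Rightarrow> 'o2) \<Rightarrow> ('m1 \<Rightarrow> 'm2) \<Rightarrow> bool" where
  "contraction N1 N2 Fo Fm \<longleftrightarrow> admissible N1 N2 Fo Fm \<and> epi_functor N1 N2 Fo Fm \<and>
     (\<forall>A2\<in>Obj N2. corolla (fiber N1 N2 Fo Fm A2))"

end

theory Submission
  imports Defs
begin

lemma cat_dom: "category C \<Longrightarrow> f \<in> Mor C \<Longrightarrow> Dom C f \<in> Obj C" unfolding category_def by blast
lemma cat_cod: "category C \<Longrightarrow> f \<in> Mor C \<Longrightarrow> Cod C f \<in> Obj C" unfolding category_def by blast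
lemma cat_idm: "category C \<Longrightarrow> A \<in> Obj C \<Longrightarrow> Idm C A \<in> Mor C" unfolding category_def by blast
lemma cat_idm_dom: "category C \<Longrightarrow> A \<in> Obj C \<Longrightarrow> Dom C (Idm C A) = A" unfolding category_def by blast
lemma cat_idm_cod: "category C \<Longrightarrow> A \<in> Obj C \<Longrightarrow> Cod C (Idm C A) = A" unfolding category_def by blast
lemma cat_cmp: "category C \<Longrightarrow> f \<in> Mor C \<Longrightarrow> g \<in> Mor C \<Longrightarrow> Cod C f = Dom C g \<Longrightarrow> Cmp C g f \<in> Mor C"
  unfolding category_def by blast
lemma cat_cmp_dom: "category C \<Longrightarrow> f \<in> Mor C \<Longrightarrow> g \<in> Mor C \<Longrightarrow> Cod C f = Dom C g \<Longrightarrow> Dom C (Cmp C g f) = Dom C f"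
  unfolding category_def by blast
lemma cat_cmp_cod: "category C \<Longrightarrow> f \<in> Mor C \<Longrightarrow> g \<in> Mor C \<Longrightarrow> Cod C f = Dom C g \<Longrightarrow> Cod C (Cmp C g f) = Cod C g"
  unfolding category_def by blast
lemma cat_idl: "category C \<Longrightarrow> f \<in> Mor C \<Longrightarrow> Cmp C (Idm C (Cod C f)) f = f" unfolding category_def by blast
lemma cat_idr: "category C \<Longrightarrow> f \<in> Mor C \<Longrightarrow> Cmp C f (Idm C (Dom C f)) = f" unfolding category_def by blast
lemma cat_assoc: "category C \<Longrightarrow> f \<in> Mor C \<Longrightarrow> g \<in> Mor C \<Longrightarrow> h \<in> Mor C \<Longrightarrow> Cod C f = Dom C g \<Longrightarrow> Cod C g = Dom C h \<Longrightarrow>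
        Cmp C h (Cmp C g f) = Cmp C (Cmp C h g) f" unfolding category_def by blast

lemma fun_c1: "functor C D Fo Fm \<Longrightarrow> category C" unfolding functor_def by blast
lemma fun_c2: "functor C D Fo Fm \<Longrightarrow> category D" unfolding functor_def by blast
lemma fun_obj: "functor C D Fo Fm \<Longrightarrow> A \<in> Obj C \<Longrightarrow> Fo A \<in> Obj D" unfolding functor_def by blast
lemma fun_mor: "functor C D Fo Fm \<Longrightarrow> f \<in> Mor C \<Longrightarrow> Fm f \<in> Mor D" unfolding functor_def by blast
lemma fun_dom: "functor C D Fo Fm \<Longrightarrow> f \<in> Mor C \<Longrightarrow> Dom D (Fm f) = Fo (Dom C f)" unfolding functor_def by blast
lemma fun_cod: "functor C D Fo Fm \<Longrightarrow> f \<in> Mor C \<Longrightarrow> Cod D (Fm f) = Fo (Cod C f)" unfolding functor_def by blast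
lemma fun_idm: "functor C D Fo Fm \<Longrightarrow> A \<in> Obj C \<Longrightarrow> Fm (Idm C A) = Idm D (Fo A)" unfolding functor_def by blast
lemma fun_cmp: "functor C D Fo Fm \<Longrightarrow> f \<in> Mor C \<Longrightarrow> g \<in> Mor C \<Longrightarrow> Cod C f = Dom C g \<Longrightarrow> Fm (Cmp C g f) = Cmp D (Fm g) (Fm f)"
  unfolding functor_def by blast

lemma fun_comp: "functor C D Fo Fm \<Longrightarrow> functor D E Go Gm \<Longrightarrow> functor C E (Go \<circ> Fo) (Gm \<circ> Fm)"
  unfolding functor_def by (auto simp: comp_apply)

lemma nested_measure:
  assumes "nested_graph N"
  obtains d :: "'m \<Rightarrow> nat" where
    "\<And>f g. f \<in> Mor N \<Longrightarrow> g \<in> Mor N \<Longrightarrow> Cod N f = Dom N g \<Longrightarrow> d (Cmp N g f) = d f + d g"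
    "\<And>f. flag N f \<Longrightarrow> d f > 0"
    "\<And>A. A \<in> Obj N \<Longrightarrow> d (Idm N A) = 0"
proof -
  obtain n Go Gm where F: "functor N (ord_cat n) Go Gm"
    and NI: "\<forall>f\<in>Mor N. \<not> is_identity N f \<longrightarrow> \<not> is_identity (ord_cat n) (Gm f)"
    using assms unfolding nested_graph_def by blast
  have C: "category N" using F fun_c1 by blast
  have G: "Gm f = (Go (Dom N f), Go (Cod N f)) \<and> Go (Dom N f) \<le> Go (Cod N f)" if "f \<in> Mor N" for f
  proof -
    have "Gm f \<in> Mor (ord_cat n)" using fun_mor[OF F that] .
    moreover have "fst (Gm f) = Go (Dom N f)" "snd (Gm f) = Go (Cod N f)"
      using fun_dom[OF F that] fun_cod[OF F that] by (auto simp: ord_cat_def)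
    ultimately show ?thesis by (cases "Gm f") (auto simp: ord_cat_def)
  qed
  define d where "d f = Go (Cod N f) - Go (Dom N f)" for f
  show ?thesis
  proof
    fix f g assume h: "f \<in> Mor N" "g \<in> Mor N" "Cod N f = Dom N g"
    show "d (Cmp N g f) = d f + d g" using G[OF h(1)] G[OF h(2)] h
      by (simp add: d_def cat_cmp_dom[OF C] cat_cmp_cod[OF C])
  next
    fix f assume fl: "flag N f"
    hence m: "f \<in> Mor N" and ni: "\<not> is_identity N f" unfolding flag_def by auto
    have "\<not> is_identity (ord_cat n) (Gm f)" using NI m ni by blast
    thus "d f > 0" using G[OF m] by (auto simp: d_def is_identity_def ord_cat_def)
  next
    fix A assume "A \<in> Obj N"
    thus "d (Idm N A) = 0" by (simp add: d_def cat_idm_dom[OF C] cat_idm_cod[OF C])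
  qed
qed

lemma nested_cat: "nested_graph N \<Longrightarrow> category N" unfolding nested_graph_def by blast

lemma nested_id_comp:
  assumes N: "nested_graph N" and m: "g \<in> Mor N" "h \<in> Mor N" "Cod N g = Dom N h"
    and id: "is_identity N (Cmp N h g)"
  shows "is_identity N g" "is_identity N h"
proof -
  have C: "category N" using nested_cat[OF N] .
  obtain d :: "_ \<Rightarrow> nat" where d1: "\<And>f g. f \<in> Mor N \<Longrightarrow> g \<in> Mor N \<Longrightarrow> Cod N f = Dom N g \<Longrightarrow> d (Cmp N g f) = d f + d g"
    and d2: "\<And>f. flag N f \<Longrightarrow> d f > 0" and d3: "\<And>A. A \<in> Obj N \<Longrightarrow> d (Idm N A) = 0"
    by (rule nested_measure[OF N]) (rule that)
  have "Cmp N h g \<in> Mor N" using cat_cmp[OF C m] .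
  hence "d (Cmp N h g) = 0" using id d3 cat_dom[OF C] unfolding is_identity_def by metis
  hence "d g = 0" "d h = 0" using d1[OF m] by auto
  thus "is_identity N g" "is_identity N h" using d2 m unfolding flag_def by force+
qed


lemma first_irred:
  assumes N: "nested_graph N" and fl: "flag N f"
  shows "\<exists>i r. irreducible_flag N i \<and> Dom N i = Dom N f \<and> r \<in> Mor N \<and> Cod N i = Dom N r \<and> f = Cmp N r i"
proof -
  have C: "category N" using nested_cat[OF N] .
  obtain d :: "_ \<Rightarrow> nat" where d1: "\<And>f g. f \<in> Mor N \<Longrightarrow> g \<in> Mor N \<Longrightarrow> Cod N f = Dom N g \<Longrightarrow> d (Cmp N g f) = d f + d g"
    and d2: "\<And>f. flag N f \<Longrightarrow> d f > 0" and d3: "\<And>A. A \<in> Obj N \<Longrightarrow> d (Idm N A) = 0"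
    by (rule nested_measure[OF N]) (rule that)
  have "\<forall>f. d f = k \<longrightarrow> flag N f \<longrightarrow>
     (\<exists>i r. irreducible_flag N i \<and> Dom N i = Dom N f \<and> r \<in> Mor N \<and> Cod N i = Dom N r \<and> f = Cmp N r i)" for k
  proof (induction k rule: less_induct)
    case (less k)
    show ?case
    proof (intro allI impI)
      fix f assume dk: "d f = k" and fl: "flag N f"
      have fm: "f \<in> Mor N" using fl unfolding flag_def by blast
      show "\<exists>i r. irreducible_flag N i \<and> Dom N i = Dom N f \<and> r \<in> Mor N \<and> Cod N i = Dom N r \<and> f = Cmp N r i"
      proof (cases "irreducible_flag N f")
        case True
        then show ?thesis
          by (intro exI[of _ f] exI[of _ "Idm N (Cod N f)"])
             (simp add: cat_idm[OF C] cat_cod[OF C fm] cat_idm_dom[OF C] cat_cod[OF C] fm cat_idl[OF C fm])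
      next
        case False
        have "\<exists>g h. flag N g \<and> flag N h \<and> Cod N g = Dom N h \<and> f = Cmp N h g"
          using False fl unfolding irreducible_flag_def by blast
        then obtain g h where g: "flag N g" and h: "flag N h" and gh: "Cod N g = Dom N h" and fe: "f = Cmp N h g"
          by (elim exE conjE)
        have gm: "g \<in> Mor N" and hm: "h \<in> Mor N" using g h unfolding flag_def by auto
        have "d f = d g + d h" using d1[OF gm hm gh] fe by simp
        moreover have "d h > 0" using d2[OF h] .
        ultimately have dg: "d g < k" using dk by simp
        obtain i r where i: "irreducible_flag N i" "Dom N i = Dom N g" "r \<in> Mor N" "Cod N i = Dom N r" "g = Cmp N r i"
          using less[OF dg, rule_format, OF refl g] by (elim exE conjE)
        have im: "i \<in> Mor N" using i(1) unfolding irreducible_flag_def flag_def by blast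
        have cr: "Cod N r = Dom N h" using gh i cat_cmp_cod[OF C im i(3) i(4)] by simp
        have "f = Cmp N (Cmp N h r) i" using fe i(5) cat_assoc[OF C im i(3) hm i(4) cr] by simp
        moreover have "Cmp N h r \<in> Mor N" using cat_cmp[OF C i(3) hm cr] .
        moreover have "Dom N (Cmp N h r) = Dom N r" using cat_cmp_dom[OF C i(3) hm cr] .
        moreover have "Dom N f = Dom N g" using fe cat_cmp_dom[OF C gm hm gh] by simp
        ultimately show ?thesis using i by (intro exI[of _ i] exI[of _ "Cmp N h r"]) simp
      qed
    qed
  qed
  from this[of "d f"] fl show ?thesis by blast
qed

lemma gen_mor: assumes F: "functor C D Fo Fm" shows "g \<in> generated_by_image C D Fm \<Longrightarrow> g \<in> Mor D"
  by (induction rule: generated_by_image.induct) (auto intro: fun_mor[OF F] cat_cmp[OF fun_c2[OF F]])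

lemma gen_dom: assumes F: "functor C D Fo Fm" shows "g \<in> generated_by_image C D Fm \<Longrightarrow> \<exists>f\<in>Mor C. Dom D g = Fo (Dom C f)"
proof (induction rule: generated_by_image.induct)
  case (img f) thus ?case using fun_dom[OF F] by blast
next
  case (comp g h) thus ?case using cat_cmp_dom[OF fun_c2[OF F]] gen_mor[OF F] by metis
qed

lemma epi_surj: assumes E: "epi_functor C D Fo Fm" and A: "A \<in> Obj D" shows "\<exists>A'\<in>Obj C. Fo A' = A"
proof -
  have F: "functor C D Fo Fm" using E epi_functor_def by blast
  have D: "category D" using fun_c2[OF F] .
  have "Idm D A \<in> generated_by_image C D Fm" using E cat_idm[OF D A] unfolding epi_functor_def by blast
  then obtain f where "f \<in> Mor C" "Dom D (Idm D A) = Fo (Dom C f)" using gen_dom[OF F] by blast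
  thus ?thesis using cat_idm_dom[OF D A] cat_dom[OF fun_c1[OF F]] by metis
qed

lemma gen_comp: assumes F: "functor C D Fo Fm" and G: "functor D E Go Gm"
  shows "g \<in> generated_by_image C D Fm \<Longrightarrow> Gm g \<in> generated_by_image C E (Gm \<circ> Fm)"
proof (induction rule: generated_by_image.induct)
  case (img f)
  have "(Gm \<circ> Fm) f \<in> generated_by_image C E (Gm \<circ> Fm)" by (rule generated_by_image.img) (rule img)
  thus ?case by (simp add: comp_def)
next
  case (comp g h)
  have gm: "g \<in> Mor D" "h \<in> Mor D" using comp gen_mor[OF F] by auto
  have "Gm (Cmp D h g) = Cmp E (Gm h) (Gm g)" using fun_cmp[OF G gm comp(3)] .
  moreover have "Cod E (Gm g) = Dom E (Gm h)" using fun_cod[OF G gm(1)] fun_dom[OF G gm(2)] comp(3) by simp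
  ultimately show ?case using generated_by_image.comp comp by metis
qed

lemma gen_trans: assumes F: "functor C D Fo Fm" and G: "functor D E Go Gm" and S: "Mor D \<subseteq> generated_by_image C D Fm"
  shows "g \<in> generated_by_image D E Gm \<Longrightarrow> g \<in> generated_by_image C E (Gm \<circ> Fm)"
proof (induction rule: generated_by_image.induct)
  case (img f)
  have "f \<in> generated_by_image C D Fm" using S img by (rule subsetD)
  from gen_comp[OF F G this] show ?case .
next
  case (comp g h)
  show ?case by (rule generated_by_image.comp) (use comp in auto)
qed

lemma epi_comp: assumes "epi_functor C D Fo Fm" "epi_functor D E Go Gm"
  shows "epi_functor C E (Go \<circ> Fo) (Gm \<circ> Fm)"
proof -
  have F: "functor C D Fo Fm" and S: "Mor D \<subseteq> generated_by_image C D Fm"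
    and G: "functor D E Go Gm" and S2: "Mor E \<subseteq> generated_by_image D E Gm"
    using assms unfolding epi_functor_def by auto
  show ?thesis unfolding epi_functor_def using fun_comp[OF F G] gen_trans[OF F G S] S2 by blast
qed

lemma gen_first:
  assumes F: "functor C D Fo Fm"
  shows "g \<in> generated_by_image C D Fm \<Longrightarrow> \<not> is_identity D g \<Longrightarrow>
    \<exists>f h. f \<in> Mor C \<and> h \<in> Mor D \<and> \<not> is_identity D (Fm f) \<and> Dom D (Fm f) = Dom D g \<and>
          Cod D (Fm f) = Dom D h \<and> g = Cmp D h (Fm f)"
proof (induction rule: generated_by_image.induct)
  case (img f)
  have D: "category D" using fun_c2[OF F] .
  have m: "Fm f \<in> Mor D" using fun_mor[OF F img(1)] .
  show ?case
    by (rule exI[of _ f], rule exI[of _ "Idm D (Cod D (Fm f))"])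
       (simp add: img m cat_idm[OF D] cat_cod[OF D] cat_idm_dom[OF D] cat_idl[OF D])
next
  case (comp g h)
  have D: "category D" using fun_c2[OF F] .
  have gm: "g \<in> Mor D" "h \<in> Mor D" using comp.hyps gen_mor[OF F] by auto
  have c5: "Cod D g = Dom D h" using comp.hyps by blast
  have c6: "\<not> is_identity D (Cmp D h g)" using comp.prems by blast
  note c2 = comp.IH(1) and c4 = comp.IH(2)
  have dc: "Dom D (Cmp D h g) = Dom D g" using cat_cmp_dom[OF D gm c5] .
  show ?case
  proof (cases "is_identity D g")
    case True
    hence ge: "g = Idm D (Dom D g)" unfolding is_identity_def .
    have "Cod D g = Dom D g" using ge cat_idm_cod[OF D cat_dom[OF D gm(1)]] by metis
    hence "Cmp D h g = h" using ge c5 cat_idr[OF D gm(2)] by metis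
    hence "\<not> is_identity D h" using c6 by simp
    then obtain f k where fk: "f \<in> Mor C \<and> k \<in> Mor D \<and> \<not> is_identity D (Fm f) \<and> Dom D (Fm f) = Dom D h \<and>
          Cod D (Fm f) = Dom D k \<and> h = Cmp D k (Fm f)" using c4 by blast
    have "Dom D (Cmp D h g) = Dom D h" using dc c5 \<open>Cod D g = Dom D g\<close> by simp
    thus ?thesis using fk \<open>Cmp D h g = h\<close> by (intro exI[of _ f] exI[of _ k]) simp
  next
    case False
    then obtain f k where fk: "f \<in> Mor C" "k \<in> Mor D" "\<not> is_identity D (Fm f)" "Dom D (Fm f) = Dom D g"
          "Cod D (Fm f) = Dom D k" "g = Cmp D k (Fm f)" using c2 by blast
    have fm: "Fm f \<in> Mor D" using fun_mor[OF F fk(1)] .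
    have ck: "Cod D k = Dom D h" using c5 fk cat_cmp_cod[OF D fm fk(2) fk(5)] by simp
    have "Cmp D h g = Cmp D (Cmp D h k) (Fm f)" using fk(6) cat_assoc[OF D fm fk(2) gm(2) fk(5) ck] by simp
    moreover have "Cmp D h k \<in> Mor D" using cat_cmp[OF D fk(2) gm(2) ck] .
    moreover have "Dom D (Cmp D h k) = Dom D k" using cat_cmp_dom[OF D fk(2) gm(2) ck] .
    ultimately show ?thesis using fk dc by (intro exI[of _ f] exI[of _ "Cmp D h k"]) simp
  qed
qed


lemma adm_fun: "admissible N1 N2 Fo Fm \<Longrightarrow> functor N1 N2 Fo Fm" unfolding admissible_def by blast

lemma contr_lift:
  assumes N1: "nested_graph N1" and N2: "nested_graph N2" and A: "admissible N1 N2 ko km"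
  shows "flag N1 f \<Longrightarrow> \<not> is_identity N2 (km f) \<Longrightarrow>
    \<exists>f'. f' \<in> Mor N1 \<and> km f' = km f \<and> vertex (fiber N1 N2 ko km (ko (Dom N1 f))) (Dom N1 f')"
proof -
  have C1: "category N1" using nested_cat[OF N1] .
  have C2: "category N2" using nested_cat[OF N2] .
  have F: "functor N1 N2 ko km" using adm_fun[OF A] .
  have AD: "\<And>f g. irreducible_flag N1 f \<Longrightarrow> is_identity N2 (km f) \<Longrightarrow> irreducible_flag N1 g \<Longrightarrow> Dom N1 g = Dom N1 f
      \<Longrightarrow> is_identity N2 (km g)" using A unfolding admissible_def by blast
  obtain d :: "_ \<Rightarrow> nat" where d1: "\<And>f g. f \<in> Mor N1 \<Longrightarrow> g \<in> Mor N1 \<Longrightarrow> Cod N1 f = Dom N1 g \<Longrightarrow> d (Cmp N1 g f) = d f + d g"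
    and d2: "\<And>f. flag N1 f \<Longrightarrow> d f > 0" and d3: "\<And>A. A \<in> Obj N1 \<Longrightarrow> d (Idm N1 A) = 0"
    by (rule nested_measure[OF N1]) (rule that)
  have "\<forall>f. d f = k \<longrightarrow> flag N1 f \<longrightarrow> \<not> is_identity N2 (km f) \<longrightarrow>
     (\<exists>f'. f' \<in> Mor N1 \<and> km f' = km f \<and> vertex (fiber N1 N2 ko km (ko (Dom N1 f))) (Dom N1 f'))" for k
  proof (induction k rule: less_induct)
    case (less k)
    show ?case
    proof (intro allI impI)
      fix f assume dk: "d f = k" and fl: "flag N1 f" and nid: "\<not> is_identity N2 (km f)"
      have fm: "f \<in> Mor N1" using fl unfolding flag_def by blast
      define z where "z = Dom N1 f"
      have zo: "z \<in> Obj N1" unfolding z_def using cat_dom[OF C1 fm] .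
      have kzo: "ko z \<in> Obj N2" using fun_obj[OF F zo] .
      show "\<exists>f'. f' \<in> Mor N1 \<and> km f' = km f \<and> vertex (fiber N1 N2 ko km (ko (Dom N1 f))) (Dom N1 f')"
      proof (cases "vertex (fiber N1 N2 ko km (ko z)) z")
        case True thus ?thesis using fm unfolding z_def by blast
      next
        case False
        have "z \<in> Obj (fiber N1 N2 ko km (ko z))" by (simp add: fiber_def zo)
        with False obtain g where g1: "flag (fiber N1 N2 ko km (ko z)) g" and g2: "Dom (fiber N1 N2 ko km (ko z)) g = z"
          unfolding vertex_def by blast
        hence gm: "g \<in> Mor N1" and gk: "km g = Idm N2 (ko z)" and gni: "\<not> is_identity N1 g" and gd: "Dom N1 g = z"
          by (auto simp: flag_def fiber_def is_identity_def)
        have gfl: "flag N1 g" using gm gni unfolding flag_def by blast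
        obtain i r where i: "irreducible_flag N1 i" "Dom N1 i = Dom N1 g" "r \<in> Mor N1" "Cod N1 i = Dom N1 r" "g = Cmp N1 r i"
          using first_irred[OF N1 gfl] by (elim exE conjE)
        have im: "i \<in> Mor N1" using i(1) unfolding irreducible_flag_def flag_def by blast
        have gid: "is_identity N2 (km g)" unfolding is_identity_def using gk fun_dom[OF F gm] gd by simp
        have "km g = Cmp N2 (km r) (km i)" using fun_cmp[OF F im i(3) i(4)] i(5) by simp
        moreover have "Cod N2 (km i) = Dom N2 (km r)" using fun_cod[OF F im] fun_dom[OF F i(3)] i(4) by simp
        ultimately have iid: "is_identity N2 (km i)" using nested_id_comp(1)[OF N2 fun_mor[OF F im] fun_mor[OF F i(3)]] gid by simp
        obtain i' r' where i': "irreducible_flag N1 i'" "Dom N1 i' = Dom N1 f" "r' \<in> Mor N1" "Cod N1 i' = Dom N1 r'" "f = Cmp N1 r' i'"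
          using first_irred[OF N1 fl] by (elim exE conjE)
        have i'm: "i' \<in> Mor N1" using i'(1) unfolding irreducible_flag_def flag_def by blast
        have i'id: "is_identity N2 (km i')" using AD[OF i(1) iid i'(1)] i'(2) i(2) gd z_def by simp
        have dki': "Dom N2 (km i') = ko z" using fun_dom[OF F i'm] i'(2) z_def by simp
        have ki': "km i' = Idm N2 (ko z)" using i'id dki' unfolding is_identity_def by simp
        have dr': "Dom N2 (km r') = ko z"
          using fun_cod[OF F i'm] fun_dom[OF F i'(3)] i'(4) ki' cat_idm_cod[OF C2 kzo] by simp
        have "km f = Cmp N2 (km r') (km i')" using fun_cmp[OF F i'm i'(3) i'(4)] i'(5) by simp
        hence kf: "km f = km r'" using ki' dr' cat_idr[OF C2 fun_mor[OF F i'(3)]] by simp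
        have r'ni: "\<not> is_identity N1 r'"
        proof
          assume "is_identity N1 r'"
          hence "r' = Idm N1 (Dom N1 r')" unfolding is_identity_def .
          hence "km r' = Idm N2 (ko (Dom N1 r'))" using fun_idm[OF F cat_dom[OF C1 i'(3)]] by metis
          hence "is_identity N2 (km r')" unfolding is_identity_def using fun_dom[OF F i'(3)] by simp
          thus False using nid kf by simp
        qed
        have r'fl: "flag N1 r'" using i'(3) r'ni unfolding flag_def by blast
        have "d f = d i' + d r'" using d1[OF i'm i'(3) i'(4)] i'(5) by simp
        moreover have "d i' > 0" using d2 i'(1) unfolding irreducible_flag_def by blast
        ultimately have dr: "d r' < k" using dk by simp
        have nr: "\<not> is_identity N2 (km r')" using nid kf by simp
        obtain f' where f': "f' \<in> Mor N1" "km f' = km r'" "vertex (fiber N1 N2 ko km (ko (Dom N1 r'))) (Dom N1 f')"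
          using less[OF dr, rule_format, OF refl r'fl nr] by (elim exE conjE)
        have "ko (Dom N1 r') = ko z" using fun_dom[OF F i'(3)] dr' by simp
        thus ?thesis using f' kf unfolding z_def by (intro exI[of _ f']) simp
      qed
    qed
  qed
  from this[of "d f"] show "flag N1 f \<Longrightarrow> \<not> is_identity N2 (km f) \<Longrightarrow>
    \<exists>f'. f' \<in> Mor N1 \<and> km f' = km f \<and> vertex (fiber N1 N2 ko km (ko (Dom N1 f))) (Dom N1 f')" by blast
qed


lemma fiber_simps:
  "Obj (fiber N1 N2 Fo Fm A2) = {A\<in>Obj N1. Fo A = A2}"
  "Mor (fiber N1 N2 Fo Fm A2) = {f\<in>Mor N1. Fm f = Idm N2 A2}"
  "Dom (fiber N1 N2 Fo Fm A2) = Dom N1" "Cod (fiber N1 N2 Fo Fm A2) = Cod N1"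
  "Idm (fiber N1 N2 Fo Fm A2) = Idm N1" "Cmp (fiber N1 N2 Fo Fm A2) = Cmp N1"
  by (simp_all add: fiber_def)

lemma fiber_is_identity: "is_identity (fiber N1 N2 Fo Fm A2) f = is_identity N1 f"
  by (simp add: is_identity_def fiber_simps)

lemma fiber_cat:
  assumes F: "functor N1 N2 Fo Fm" and A2: "A2 \<in> Obj N2"
  shows "category (fiber N1 N2 Fo Fm A2)"
proof -
  let ?F = "fiber N1 N2 Fo Fm A2"
  have C1: "category N1" using fun_c1[OF F] .
  have C2: "category N2" using fun_c2[OF F] .
  have 1: "\<forall>f\<in>Mor ?F. Dom ?F f \<in> Obj ?F \<and> Cod ?F f \<in> Obj ?F"
  proof
    fix f assume "f \<in> Mor ?F"
    hence fm: "f \<in> Mor N1" and fk: "Fm f = Idm N2 A2" by (simp_all add: fiber_simps)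
    have "Fo (Dom N1 f) = A2" using fun_dom[OF F fm] fk cat_idm_dom[OF C2 A2] by simp
    moreover have "Fo (Cod N1 f) = A2" using fun_cod[OF F fm] fk cat_idm_cod[OF C2 A2] by simp
    ultimately show "Dom ?F f \<in> Obj ?F \<and> Cod ?F f \<in> Obj ?F"
      by (simp add: fiber_simps cat_dom[OF C1 fm] cat_cod[OF C1 fm])
  qed
  have 2: "\<forall>A\<in>Obj ?F. Idm ?F A \<in> Mor ?F \<and> Dom ?F (Idm ?F A) = A \<and> Cod ?F (Idm ?F A) = A"
  proof
    fix A assume "A \<in> Obj ?F"
    hence Ao: "A \<in> Obj N1" and Ak: "Fo A = A2" by (simp_all add: fiber_simps)
    show "Idm ?F A \<in> Mor ?F \<and> Dom ?F (Idm ?F A) = A \<and> Cod ?F (Idm ?F A) = A"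
      using fun_idm[OF F Ao] Ak by (simp add: fiber_simps cat_idm[OF C1 Ao] cat_idm_dom[OF C1 Ao] cat_idm_cod[OF C1 Ao])
  qed
  have 3: "\<forall>f\<in>Mor ?F. \<forall>g\<in>Mor ?F. Cod ?F f = Dom ?F g \<longrightarrow>
        Cmp ?F g f \<in> Mor ?F \<and> Dom ?F (Cmp ?F g f) = Dom ?F f \<and> Cod ?F (Cmp ?F g f) = Cod ?F g"
  proof (intro ballI impI)
    fix f g assume "f \<in> Mor ?F" "g \<in> Mor ?F" and c: "Cod ?F f = Dom ?F g"
    hence fm: "f \<in> Mor N1" and fk: "Fm f = Idm N2 A2" and gm: "g \<in> Mor N1" and gk: "Fm g = Idm N2 A2"
      and c': "Cod N1 f = Dom N1 g" by (simp_all add: fiber_simps)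
    have "Fm (Cmp N1 g f) = Cmp N2 (Idm N2 A2) (Idm N2 A2)" using fun_cmp[OF F fm gm c'] fk gk by simp
    also have "\<dots> = Idm N2 A2" using cat_idl[OF C2 cat_idm[OF C2 A2]] cat_idm_cod[OF C2 A2] by simp
    finally show "Cmp ?F g f \<in> Mor ?F \<and> Dom ?F (Cmp ?F g f) = Dom ?F f \<and> Cod ?F (Cmp ?F g f) = Cod ?F g"
      by (simp add: fiber_simps cat_cmp[OF C1 fm gm c'] cat_cmp_dom[OF C1 fm gm c'] cat_cmp_cod[OF C1 fm gm c'])
  qed
  have 4: "\<forall>f\<in>Mor ?F. Cmp ?F (Idm ?F (Cod ?F f)) f = f \<and> Cmp ?F f (Idm ?F (Dom ?F f)) = f"
    using cat_idl[OF C1] cat_idr[OF C1] by (simp add: fiber_simps)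
  have 5: "\<forall>f\<in>Mor ?F. \<forall>g\<in>Mor ?F. \<forall>h\<in>Mor ?F. Cod ?F f = Dom ?F g \<longrightarrow> Cod ?F g = Dom ?F h \<longrightarrow>
        Cmp ?F h (Cmp ?F g f) = Cmp ?F (Cmp ?F h g) f"
    using cat_assoc[OF C1] by (simp add: fiber_simps)
  show ?thesis unfolding category_def by (rule conjI[OF 1 conjI[OF 2 conjI[OF 3 conjI[OF 4 5]]]])
qed

lemma fiber_nested:
  assumes N1: "nested_graph N1" and F: "functor N1 N2 Fo Fm" and A2: "A2 \<in> Obj N2"
  shows "nested_graph (fiber N1 N2 Fo Fm A2)"
proof -
  let ?F = "fiber N1 N2 Fo Fm A2"
  have CF: "category ?F" using fiber_cat[OF F A2] .
  obtain n Go Gm where G: "functor N1 (ord_cat n) Go Gm"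
    and NI: "\<forall>f\<in>Mor N1. \<not> is_identity N1 f \<longrightarrow> \<not> is_identity (ord_cat n) (Gm f)"
    using N1 unfolding nested_graph_def by blast
  have CO: "category (ord_cat n)" using fun_c2[OF G] .
  have GF: "functor ?F (ord_cat n) Go Gm"
    unfolding functor_def using CF CO fun_obj[OF G] fun_mor[OF G] fun_dom[OF G] fun_cod[OF G]
      fun_idm[OF G] fun_cmp[OF G] by (auto simp: fiber_simps)
  have "\<forall>f\<in>Mor ?F. \<not> is_identity ?F f \<longrightarrow> \<not> is_identity (ord_cat n) (Gm f)"
    using NI by (simp add: fiber_simps fiber_is_identity)
  thus ?thesis unfolding nested_graph_def using CF GF by blast
qed


lemma fun_pres_id: assumes F: "functor C D Fo Fm" and m: "x \<in> Mor C" and i: "is_identity C x"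
  shows "is_identity D (Fm x)"
proof -
  have "x = Idm C (Dom C x)" using i unfolding is_identity_def .
  hence "Fm x = Idm D (Fo (Dom C x))" using fun_idm[OF F cat_dom[OF fun_c1[OF F] m]] by metis
  thus ?thesis unfolding is_identity_def using fun_dom[OF F m] by simp
qed

lemma irr_mor: "irreducible_flag N f \<Longrightarrow> f \<in> Mor N" unfolding irreducible_flag_def flag_def by blast

lemma adm_comp:
  assumes A1: "admissible N1 N2 f1o f1m" and A2: "admissible N2 N3 f2o f2m"
  shows "admissible N1 N3 (f2o \<circ> f1o) (f2m \<circ> f1m)"
proof -
  have F1: "functor N1 N2 f1o f1m" using adm_fun[OF A1] .
  have F2: "functor N2 N3 f2o f2m" using adm_fun[OF A2] .
  have a11: "\<And>f. irreducible_flag N1 f \<Longrightarrow> is_identity N2 (f1m f) \<or> irreducible_flag N2 (f1m f)"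
    using A1 unfolding admissible_def by blast
  have a12: "\<And>f g. irreducible_flag N1 f \<Longrightarrow> is_identity N2 (f1m f) \<Longrightarrow> irreducible_flag N1 g \<Longrightarrow> Dom N1 g = Dom N1 f
      \<Longrightarrow> is_identity N2 (f1m g)" using A1 unfolding admissible_def by blast
  have a21: "\<And>f. irreducible_flag N2 f \<Longrightarrow> is_identity N3 (f2m f) \<or> irreducible_flag N3 (f2m f)"
    using A2 unfolding admissible_def by blast
  have a22: "\<And>f g. irreducible_flag N2 f \<Longrightarrow> is_identity N3 (f2m f) \<Longrightarrow> irreducible_flag N2 g \<Longrightarrow> Dom N2 g = Dom N2 f
      \<Longrightarrow> is_identity N3 (f2m g)" using A2 unfolding admissible_def by blast
  have P1: "is_identity N3 ((f2m \<circ> f1m) f) \<or> irreducible_flag N3 ((f2m \<circ> f1m) f)" if f: "irreducible_flag N1 f" for f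
  proof (cases "is_identity N2 (f1m f)")
    case True
    thus ?thesis using fun_pres_id[OF F2 fun_mor[OF F1 irr_mor[OF f]]] by simp
  next
    case False
    hence "irreducible_flag N2 (f1m f)" using a11[OF f] by blast
    thus ?thesis using a21 by simp
  qed
  have P2: "is_identity N3 ((f2m \<circ> f1m) g)"
    if f: "irreducible_flag N1 f" and fi: "is_identity N3 ((f2m \<circ> f1m) f)" and g: "irreducible_flag N1 g"
      and dg: "Dom N1 g = Dom N1 f" for f g
  proof (cases "is_identity N2 (f1m f)")
    case True
    thus ?thesis using a12[OF f True g dg] fun_pres_id[OF F2 fun_mor[OF F1 irr_mor[OF g]]] by simp
  next
    case False
    hence fi2: "irreducible_flag N2 (f1m f)" using a11[OF f] by blast
    show ?thesis
    proof (cases "is_identity N2 (f1m g)")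
      case True
      thus ?thesis using fun_pres_id[OF F2 fun_mor[OF F1 irr_mor[OF g]]] by simp
    next
      case False
      hence gi2: "irreducible_flag N2 (f1m g)" using a11[OF g] by blast
      have "Dom N2 (f1m g) = Dom N2 (f1m f)"
        using fun_dom[OF F1 irr_mor[OF g]] fun_dom[OF F1 irr_mor[OF f]] dg by simp
      thus ?thesis using a22[OF fi2 _ gi2] fi by simp
    qed
  qed
  show ?thesis unfolding admissible_def using fun_comp[OF F1 F2] P1 P2 by blast
qed


lemma quotient_comp:
  fixes N1 :: "('o1,'m1) cat" and N2 :: "('o2,'m2) cat" and N3 :: "('o3,'m3) cat"
  assumes q1: "quotient_functor TYPE('x \<times> 'y) N1 N2 f1o f1m"
    and q2: "quotient_functor TYPE('x \<times> 'y) N2 N3 f2o f2m"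
    and surj: "\<And>A. A \<in> Obj N2 \<Longrightarrow> \<exists>A'\<in>Obj N1. f1o A' = A"
  shows "quotient_functor TYPE('x \<times> 'y) N1 N3 (f2o \<circ> f1o) (f2m \<circ> f1m)"
proof -
  have F1: "functor N1 N2 f1o f1m" using q1 unfolding quotient_functor_def by blast
  have F2: "functor N2 N3 f2o f2m" using q2 unfolding quotient_functor_def by blast
  note U1 = conjunct2[OF q1[unfolded quotient_functor_def], rule_format]
  note U2 = conjunct2[OF q2[unfolded quotient_functor_def], rule_format]
  have MAIN: "(\<exists>Ho Hm. functor N3 E Ho Hm \<and> (\<forall>A\<in>Obj N1. Ho ((f2o \<circ> f1o) A) = Go A) \<and> (\<forall>f\<in>Mor N1. Hm ((f2m \<circ> f1m) f) = Gm f)) \<and>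
        (\<forall>Ho Hm Ho' Hm'.
           functor N3 E Ho Hm \<and> (\<forall>A\<in>Obj N1. Ho ((f2o \<circ> f1o) A) = Go A) \<and> (\<forall>f\<in>Mor N1. Hm ((f2m \<circ> f1m) f) = Gm f) \<longrightarrow>
           functor N3 E Ho' Hm' \<and> (\<forall>A\<in>Obj N1. Ho' ((f2o \<circ> f1o) A) = Go A) \<and> (\<forall>f\<in>Mor N1. Hm' ((f2m \<circ> f1m) f) = Gm f) \<longrightarrow>
           (\<forall>A\<in>Obj N3. Ho A = Ho' A) \<and> (\<forall>f\<in>Mor N3. Hm f = Hm' f))"
    if G: "functor N1 E Go Gm" and cond: "\<forall>A\<in>Obj N1. \<forall>B\<in>Obj N1. (f2o \<circ> f1o) A = (f2o \<circ> f1o) B \<longrightarrow> Go A = Go B"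
    for E :: "('x,'y) cat" and Go Gm
  proof
    have cond1: "\<forall>A\<in>Obj N1. \<forall>B\<in>Obj N1. f1o A = f1o B \<longrightarrow> Go A = Go B"
    proof (intro ballI impI)
      fix A B assume "A \<in> Obj N1" "B \<in> Obj N1" "f1o A = f1o B"
      moreover have "(f2o \<circ> f1o) A = (f2o \<circ> f1o) B" using \<open>f1o A = f1o B\<close> by simp
      ultimately show "Go A = Go B" using cond by blast
    qed
    note R1 = U1[OF conjI[OF G cond1]]
    obtain H1o H1m where H1: "functor N2 E H1o H1m" "\<forall>A\<in>Obj N1. H1o (f1o A) = Go A" "\<forall>f\<in>Mor N1. H1m (f1m f) = Gm f"
      using conjunct1[OF R1] by (elim exE conjE)
    have cond2: "\<forall>A\<in>Obj N2. \<forall>B\<in>Obj N2. f2o A = f2o B \<longrightarrow> H1o A = H1o B"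
    proof (intro ballI impI)
      fix A B assume A: "A \<in> Obj N2" and B: "B \<in> Obj N2" and e: "f2o A = f2o B"
      obtain A' where A': "A' \<in> Obj N1" "f1o A' = A" using surj[OF A] by blast
      obtain B' where B': "B' \<in> Obj N1" "f1o B' = B" using surj[OF B] by blast
      have "(f2o \<circ> f1o) A' = (f2o \<circ> f1o) B'" using e A'(2) B'(2) by simp
      hence "Go A' = Go B'" using cond A'(1) B'(1) by blast
      moreover have "H1o (f1o A') = Go A'" "H1o (f1o B') = Go B'" using H1(2) A'(1) B'(1) by auto
      ultimately show "H1o A = H1o B" using A'(2) B'(2) by simp
    qed
    obtain H2o H2m where H2: "functor N3 E H2o H2m" "\<forall>A\<in>Obj N2. H2o (f2o A) = H1o A" "\<forall>f\<in>Mor N2. H2m (f2m f) = H1m f"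
      using conjunct1[OF U2[OF conjI[OF H1(1) cond2]]] by (elim exE conjE)
    show "\<exists>Ho Hm. functor N3 E Ho Hm \<and> (\<forall>A\<in>Obj N1. Ho ((f2o \<circ> f1o) A) = Go A) \<and> (\<forall>f\<in>Mor N1. Hm ((f2m \<circ> f1m) f) = Gm f)"
    proof (intro exI conjI ballI)
      show "functor N3 E H2o H2m" using H2(1) .
    next
      fix A assume A: "A \<in> Obj N1"
      show "H2o ((f2o \<circ> f1o) A) = Go A" using H2(2) H1(2) fun_obj[OF F1 A] A by simp
    next
      fix f assume f: "f \<in> Mor N1"
      show "H2m ((f2m \<circ> f1m) f) = Gm f" using H2(3) H1(3) fun_mor[OF F1 f] f by simp
    qed
  next
    have cond1: "\<forall>A\<in>Obj N1. \<forall>B\<in>Obj N1. f1o A = f1o B \<longrightarrow> Go A = Go B"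
    proof (intro ballI impI)
      fix A B assume "A \<in> Obj N1" "B \<in> Obj N1" "f1o A = f1o B"
      moreover have "(f2o \<circ> f1o) A = (f2o \<circ> f1o) B" using \<open>f1o A = f1o B\<close> by simp
      ultimately show "Go A = Go B" using cond by blast
    qed
    note R1 = U1[OF conjI[OF G cond1]]
    show "\<forall>Ho Hm Ho' Hm'.
           functor N3 E Ho Hm \<and> (\<forall>A\<in>Obj N1. Ho ((f2o \<circ> f1o) A) = Go A) \<and> (\<forall>f\<in>Mor N1. Hm ((f2m \<circ> f1m) f) = Gm f) \<longrightarrow>
           functor N3 E Ho' Hm' \<and> (\<forall>A\<in>Obj N1. Ho' ((f2o \<circ> f1o) A) = Go A) \<and> (\<forall>f\<in>Mor N1. Hm' ((f2m \<circ> f1m) f) = Gm f) \<longrightarrow>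
           (\<forall>A\<in>Obj N3. Ho A = Ho' A) \<and> (\<forall>f\<in>Mor N3. Hm f = Hm' f)"
    proof (intro allI impI)
      fix Ho Hm Ho' Hm'
      assume h: "functor N3 E Ho Hm \<and> (\<forall>A\<in>Obj N1. Ho ((f2o \<circ> f1o) A) = Go A) \<and> (\<forall>f\<in>Mor N1. Hm ((f2m \<circ> f1m) f) = Gm f)"
        and h': "functor N3 E Ho' Hm' \<and> (\<forall>A\<in>Obj N1. Ho' ((f2o \<circ> f1o) A) = Go A) \<and> (\<forall>f\<in>Mor N1. Hm' ((f2m \<circ> f1m) f) = Gm f)"
      have K: "functor N2 E (Ho \<circ> f2o) (Hm \<circ> f2m)" using fun_comp[OF F2 conjunct1[OF h]] .
      have K': "functor N2 E (Ho' \<circ> f2o) (Hm' \<circ> f2m)" using fun_comp[OF F2 conjunct1[OF h']] .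
      have a1: "(\<forall>A\<in>Obj N1. (Ho \<circ> f2o) (f1o A) = Go A) \<and> (\<forall>f\<in>Mor N1. (Hm \<circ> f2m) (f1m f) = Gm f)" using h by simp
      have a1': "(\<forall>A\<in>Obj N1. (Ho' \<circ> f2o) (f1o A) = Go A) \<and> (\<forall>f\<in>Mor N1. (Hm' \<circ> f2m) (f1m f) = Gm f)" using h' by simp
      have eq: "(\<forall>A\<in>Obj N2. (Ho \<circ> f2o) A = (Ho' \<circ> f2o) A) \<and> (\<forall>f\<in>Mor N2. (Hm \<circ> f2m) f = (Hm' \<circ> f2m) f)"
        using conjunct2[OF R1, rule_format, OF conjI[OF K a1] conjI[OF K' a1']] .
      have cK: "\<forall>A\<in>Obj N2. \<forall>B\<in>Obj N2. f2o A = f2o B \<longrightarrow> (Ho \<circ> f2o) A = (Ho \<circ> f2o) B" by simp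
      note R2 = U2[OF conjI[OF K cK]]
      have b: "functor N3 E Ho Hm \<and> (\<forall>A\<in>Obj N2. Ho (f2o A) = (Ho \<circ> f2o) A) \<and> (\<forall>f\<in>Mor N2. Hm (f2m f) = (Hm \<circ> f2m) f)"
        using h by simp
      have b': "functor N3 E Ho' Hm' \<and> (\<forall>A\<in>Obj N2. Ho' (f2o A) = (Ho \<circ> f2o) A) \<and> (\<forall>f\<in>Mor N2. Hm' (f2m f) = (Hm \<circ> f2m) f)"
        using h' eq by simp
      show "(\<forall>A\<in>Obj N3. Ho A = Ho' A) \<and> (\<forall>f\<in>Mor N3. Hm f = Hm' f)"
        using conjunct2[OF R2, rule_format, OF b b'] .
    qed
  qed
  show ?thesis unfolding quotient_functor_def
  proof (intro conjI allI impI)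
    show "functor N1 N3 (f2o \<circ> f1o) (f2m \<circ> f1m)" using fun_comp[OF F1 F2] .
  next
    fix E :: "('x,'y) cat" and Go Gm
    assume as: "functor N1 E Go Gm \<and> (\<forall>A\<in>Obj N1. \<forall>B\<in>Obj N1. (f2o \<circ> f1o) A = (f2o \<circ> f1o) B \<longrightarrow> Go A = Go B)"
    show "\<exists>Ho Hm. functor N3 E Ho Hm \<and> (\<forall>A\<in>Obj N1. Ho ((f2o \<circ> f1o) A) = Go A) \<and> (\<forall>f\<in>Mor N1. Hm ((f2m \<circ> f1m) f) = Gm f)"
      using conjunct1[OF MAIN[OF conjunct1[OF as] conjunct2[OF as]]] .
  next
    fix E :: "('x,'y) cat" and Go Gm Ho Hm Ho' Hm'
    assume as: "functor N1 E Go Gm \<and> (\<forall>A\<in>Obj N1. \<forall>B\<in>Obj N1. (f2o \<circ> f1o) A = (f2o \<circ> f1o) B \<longrightarrow> Go A = Go B)"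
      and h1: "functor N3 E Ho Hm \<and> (\<forall>A\<in>Obj N1. Ho ((f2o \<circ> f1o) A) = Go A) \<and> (\<forall>f\<in>Mor N1. Hm ((f2m \<circ> f1m) f) = Gm f)"
      and h2: "functor N3 E Ho' Hm' \<and> (\<forall>A\<in>Obj N1. Ho' ((f2o \<circ> f1o) A) = Go A) \<and> (\<forall>f\<in>Mor N1. Hm' ((f2m \<circ> f1m) f) = Gm f)"
    note Z = conjunct2[OF MAIN[OF conjunct1[OF as] conjunct2[OF as]], rule_format, OF h1 h2]
    show "\<forall>A\<in>Obj N3. Ho A = Ho' A" using conjunct1[OF Z] .
    show "\<forall>f\<in>Mor N3. Hm f = Hm' f" using conjunct2[OF Z] .
  qed
qed


lemma corolla_unique: "corolla N \<Longrightarrow> vertex N v \<Longrightarrow> vertex N w \<Longrightarrow> v = w"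
  unfolding corolla_def by blast

lemma contr_comp:
  assumes N1: "nested_graph N1" and N2: "nested_graph N2" and N3: "nested_graph N3"
    and K1: "contraction N1 N2 k1o k1m" and K2: "contraction N2 N3 k2o k2m"
  shows "contraction N1 N3 (k2o \<circ> k1o) (k2m \<circ> k1m)"
proof -
  have A1: "admissible N1 N2 k1o k1m" and E1: "epi_functor N1 N2 k1o k1m"
    and Cor1: "\<forall>A2\<in>Obj N2. corolla (fiber N1 N2 k1o k1m A2)" using K1 unfolding contraction_def by auto
  have A2: "admissible N2 N3 k2o k2m" and E2: "epi_functor N2 N3 k2o k2m"
    and Cor2: "\<forall>A2\<in>Obj N3. corolla (fiber N2 N3 k2o k2m A2)" using K2 unfolding contraction_def by auto
  have F1: "functor N1 N2 k1o k1m" using adm_fun[OF A1] .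
  have F2: "functor N2 N3 k2o k2m" using adm_fun[OF A2] .
  have C1: "category N1" using nested_cat[OF N1] .
  have C2: "category N2" using nested_cat[OF N2] .
  have C3: "category N3" using nested_cat[OF N3] .
  have COR: "corolla (fiber N1 N3 (k2o \<circ> k1o) (k2m \<circ> k1m) A3)" if A3: "A3 \<in> Obj N3" for A3
  proof -
    let ?F = "fiber N1 N3 (k2o \<circ> k1o) (k2m \<circ> k1m) A3"
    let ?F2 = "fiber N2 N3 k2o k2m A3"
    let ?G = "\<lambda>x. fiber N1 N2 k1o k1m x"
    have NF: "nested_graph ?F" using fiber_nested[OF N1 fun_comp[OF F1 F2] A3] .
    have cor2: "corolla ?F2" using Cor2 A3 by blast
    obtain v2 where v2: "vertex ?F2 v2" using cor2 unfolding corolla_def by blast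
    have v2o: "v2 \<in> Obj N2" "k2o v2 = A3" using v2 unfolding vertex_def by (simp_all add: fiber_simps)
    have cor1: "corolla (?G v2)" using Cor1 v2o(1) by blast
    obtain v1 where v1: "vertex (?G v2) v1" using cor1 unfolding corolla_def by blast
    have v1o: "v1 \<in> Obj N1" "k1o v1 = v2" using v1 unfolding vertex_def by (simp_all add: fiber_simps)
    have KV: "vertex (?G w2) w" if w2: "w2 \<in> Obj N2" "k2o w2 = A3" and w: "w \<in> Obj N1" "k1o w = w2"
      and vw: "vertex ?F w" for w w2
    proof -
      have "w \<in> Obj (?G w2)" using w by (simp add: fiber_simps)
      moreover have "\<not> (flag (?G w2) \<phi> \<and> Dom (?G w2) \<phi> = w)" for \<phi>
      proof
        assume a: "flag (?G w2) \<phi> \<and> Dom (?G w2) \<phi> = w"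
        hence pm: "\<phi> \<in> Mor N1" and pk: "k1m \<phi> = Idm N2 w2" and pn: "\<not> is_identity N1 \<phi>" and pd: "Dom N1 \<phi> = w"
          by (simp_all add: flag_def fiber_simps fiber_is_identity)
        have "k2m (k1m \<phi>) = Idm N3 A3" using pk fun_idm[OF F2 w2(1)] w2(2) by simp
        hence "flag ?F \<phi> \<and> Dom ?F \<phi> = w" using pm pn pd by (simp add: flag_def fiber_simps fiber_is_identity)
        thus False using vw unfolding vertex_def by blast
      qed
      ultimately show ?thesis unfolding vertex_def by blast
    qed
    have v1F: "vertex ?F v1"
    proof -
      have "v1 \<in> Obj ?F" using v1o v2o by (simp add: fiber_simps)
      moreover have "\<not> (flag ?F f \<and> Dom ?F f = v1)" for f
      proof
        assume a: "flag ?F f \<and> Dom ?F f = v1"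
        hence fm: "f \<in> Mor N1" and fk: "k2m (k1m f) = Idm N3 A3" and fn: "\<not> is_identity N1 f" and fd: "Dom N1 f = v1"
          by (simp_all add: flag_def fiber_simps fiber_is_identity)
        have kfm: "k1m f \<in> Mor N2" using fun_mor[OF F1 fm] .
        have dkf: "Dom N2 (k1m f) = v2" using fun_dom[OF F1 fm] fd v1o(2) by simp
        have "k1m f \<in> Mor ?F2" using kfm fk by (simp add: fiber_simps)
        hence "is_identity N2 (k1m f)"
          using v2 dkf unfolding vertex_def by (auto simp: flag_def fiber_simps fiber_is_identity)
        hence "k1m f = Idm N2 v2" using dkf unfolding is_identity_def by simp
        hence "flag (?G v2) f \<and> Dom (?G v2) f = v1" using fm fn fd by (simp add: flag_def fiber_simps fiber_is_identity)
        thus False using v1 unfolding vertex_def by blast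
      qed
      ultimately show ?thesis unfolding vertex_def by blast
    qed
    have UNI: "w = v1" if vw: "vertex ?F w" for w
    proof -
      have wo: "w \<in> Obj N1" and wk: "k2o (k1o w) = A3" using vw unfolding vertex_def by (simp_all add: fiber_simps)
      define w2 where "w2 = k1o w"
      have w2o: "w2 \<in> Obj N2" using fun_obj[OF F1 wo] w2_def by simp
      have w2k: "k2o w2 = A3" using wk w2_def by simp
      have KW: "vertex (?G w2) w" using KV[OF w2o w2k wo w2_def[symmetric] vw] .
      have corw: "corolla (?G w2)" using Cor1 w2o by blast
      have vw2: "vertex ?F2 w2"
      proof -
        have "w2 \<in> Obj ?F2" using w2o w2k by (simp add: fiber_simps)
        moreover have "\<not> (flag ?F2 g \<and> Dom ?F2 g = w2)" for g
        proof
          assume a: "flag ?F2 g \<and> Dom ?F2 g = w2"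
          hence gm: "g \<in> Mor N2" and gk: "k2m g = Idm N3 A3" and gn: "\<not> is_identity N2 g" and gd: "Dom N2 g = w2"
            by (simp_all add: flag_def fiber_simps fiber_is_identity)
          have "g \<in> generated_by_image N1 N2 k1m" using E1 gm unfolding epi_functor_def by blast
          then obtain f h where fh: "f \<in> Mor N1" "h \<in> Mor N2" "\<not> is_identity N2 (k1m f)" "Dom N2 (k1m f) = Dom N2 g"
            "Cod N2 (k1m f) = Dom N2 h" "g = Cmp N2 h (k1m f)"
            using gen_first[OF F1 _ gn] by blast
          have kfm: "k1m f \<in> Mor N2" using fun_mor[OF F1 fh(1)] .
          have gid: "is_identity N3 (k2m g)" unfolding is_identity_def using gk fun_dom[OF F2 gm] gd w2k by simp
          have "k2m g = Cmp N3 (k2m h) (k2m (k1m f))" using fun_cmp[OF F2 kfm fh(2) fh(5)] fh(6) by simp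
          moreover have "Cod N3 (k2m (k1m f)) = Dom N3 (k2m h)" using fun_cod[OF F2 kfm] fun_dom[OF F2 fh(2)] fh(5) by simp
          ultimately have kkid: "is_identity N3 (k2m (k1m f))"
            using nested_id_comp(1)[OF N3 fun_mor[OF F2 kfm] fun_mor[OF F2 fh(2)]] gid by simp
          have ffl: "flag N1 f"
          proof -
            have "\<not> is_identity N1 f" using fun_pres_id[OF F1 fh(1)] fh(3) by blast
            thus ?thesis using fh(1) unfolding flag_def by blast
          qed
          obtain f' where f': "f' \<in> Mor N1" "k1m f' = k1m f" "vertex (?G (k1o (Dom N1 f))) (Dom N1 f')"
            using contr_lift[OF N1 N2 A1 ffl fh(3)] by blast
          have "k1o (Dom N1 f) = w2" using fun_dom[OF F1 fh(1)] fh(4) gd by simp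
          hence "vertex (?G w2) (Dom N1 f')" using f'(3) by simp
          hence df': "Dom N1 f' = w" using corolla_unique[OF corw _ KW] by blast
          have "Dom N3 (k2m (k1m f)) = A3" using fun_dom[OF F2 kfm] fh(4) gd w2k by simp
          hence "k2m (k1m f') = Idm N3 A3" using kkid f'(2) unfolding is_identity_def by simp
          moreover have "\<not> is_identity N1 f'"
          proof
            assume "is_identity N1 f'"
            hence "is_identity N2 (k1m f')" using fun_pres_id[OF F1 f'(1)] by blast
            thus False using fh(3) f'(2) by simp
          qed
          ultimately have "flag ?F f' \<and> Dom ?F f' = w" using f'(1) df' by (simp add: flag_def fiber_simps fiber_is_identity)
          thus False using vw unfolding vertex_def by blast
        qed
        ultimately show ?thesis unfolding vertex_def by blast
      qed
      have "w2 = v2" using corolla_unique[OF cor2 vw2 v2] .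
      hence "vertex (?G v2) w" using KW by simp
      thus "w = v1" using corolla_unique[OF cor1 _ v1] by blast
    qed
    show ?thesis unfolding corolla_def using NF v1F UNI by blast
  qed
  show ?thesis unfolding contraction_def using adm_comp[OF A1 A2] epi_comp[OF E1 E2] COR by blast
qed


theorem mainTheorem2:
  fixes N1 :: "('o1,'m1) cat" and N2 :: "('o2,'m2) cat" and N3 :: "('o3,'m3) cat"
    and mu1o :: "'o1 \<Rightarrow> 'o2" and mu1m :: "'m1 \<Rightarrow> 'm2"
    and mu2o :: "'o2 \<Rightarrow> 'o3" and mu2m :: "'m2 \<Rightarrow> 'm3"
    and k1o :: "'o1 \<Rightarrow> 'o2" and k1m :: "'m1 \<Rightarrow> 'm2"
    and k2o :: "'o2 \<Rightarrow> 'o3" and k2m :: "'m2 \<Rightarrow> 'm3"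
  assumes "nested_graph N1" and "nested_graph N2" and "nested_graph N3"
  shows "(merger TYPE('x \<times> 'y) N1 N2 mu1o mu1m \<and> merger TYPE('x \<times> 'y) N2 N3 mu2o mu2m
            \<longrightarrow> merger TYPE('x \<times> 'y) N1 N3 (mu2o \<circ> mu1o) (mu2m \<circ> mu1m))
       \<and> (contraction N1 N2 k1o k1m \<and> contraction N2 N3 k2o k2m
            \<longrightarrow> contraction N1 N3 (k2o \<circ> k1o) (k2m \<circ> k1m))"
proof (intro conjI impI)
  assume h: "merger TYPE('x \<times> 'y) N1 N2 mu1o mu1m \<and> merger TYPE('x \<times> 'y) N2 N3 mu2o mu2m"
  have A1: "admissible N1 N2 mu1o mu1m" and E1: "epi_functor N1 N2 mu1o mu1m"
    and Q1: "quotient_functor TYPE('x \<times> 'y) N1 N2 mu1o mu1m" using h unfolding merger_def by auto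
  have A2: "admissible N2 N3 mu2o mu2m" and E2: "epi_functor N2 N3 mu2o mu2m"
    and Q2: "quotient_functor TYPE('x \<times> 'y) N2 N3 mu2o mu2m" using h unfolding merger_def by auto
  show "merger TYPE('x \<times> 'y) N1 N3 (mu2o \<circ> mu1o) (mu2m \<circ> mu1m)"
    unfolding merger_def using adm_comp[OF A1 A2] epi_comp[OF E1 E2] quotient_comp[OF Q1 Q2 epi_surj[OF E1]]
    by blast
next
  assume h: "contraction N1 N2 k1o k1m \<and> contraction N2 N3 k2o k2m"
  show "contraction N1 N3 (k2o \<circ> k1o) (k2m \<circ> k1m)"
    using contr_comp[OF assms conjunct1[OF h] conjunct2[OF h]] .
qed

end
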